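(* Let $p$ be an odd prime, $d \geqslant 2$, and $V$ a $d$-dimensional vector space over $\mathbb{F}_p$ with basis $\mathbf{b}_1,\ldots,\mathbf{b}_d$. Let $G = \mathrm{Sym}(V)$, $H = \mathrm{AGL}(V)$, and let $T$ be the subgroup of $\mathrm{GL}(V)$ of all matrices that are diagonal with respect to $\mathbf{b}_1,\ldots,\mathbf{b}_d$. Let $l_1 = d(d+1)/2 - 1$. Then there exist subgroups $K_1,\ldots,K_{l_1}$ of $\mathrm{GL}(V)$, each the setwise stabiliser in $\mathrm{GL}(V)$ of a linear subspace of $V$, such that \[ G > H > K_1 > K_1 \cap K_2 > \cdots > \bigcap_{i=1}^{l_1} K_i = T. \]
   Context: $\mathrm{AGL}(V)$ is the group of invertible affine transformations $\mathbf{v} \mapsto \mathbf{v}g + \mathbf{u}$ ($g \in \mathrm{GL}(V)$, $\mathbf{u} \in V$) of $V$, regarded as a subgroup of $\mathrm{Sym}(V)$. All inclusions $>$ are strict. *)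

theory Defs
  imports "HOL-Analysis.Finite_Cartesian_Product" "Berlekamp_Zassenhaus.Finite_Field"
begin

text \<open>V = F_p^d is the type ('p mod_ring, 'n) vec with p = CARD('p), d = CARD('n);
  the basis b_1..b_d is the standard basis axis i 1. Groups are sets of maps V \<Rightarrow> V
  under composition.\<close>

definition Sym_V :: "(('p::prime_card mod_ring ^ 'n) \<Rightarrow> ('p mod_ring ^ 'n)) set" where
  "Sym_V = {f. bij f}"

definition lin_map :: "(('p::prime_card mod_ring ^ 'n) \<Rightarrow> ('p mod_ring ^ 'n)) \<Rightarrow> bool" where
  "lin_map f \<longleftrightarrow> (\<forall>x y. f (x + y) = f x + f y) \<and> (\<forall>c x. f (c *s x) = c *s f x)"

definition GL_V :: "(('p::prime_card mod_ring ^ 'n) \<Rightarrow> ('p mod_ring ^ 'n)) set" where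
  "GL_V = {f. bij f \<and> lin_map f}"

definition AGL_V :: "(('p::prime_card mod_ring ^ 'n) \<Rightarrow> ('p mod_ring ^ 'n)) set" where
  "AGL_V = {(\<lambda>v. g v + u) | g u. g \<in> GL_V}"

definition diag_T :: "(('p::prime_card mod_ring ^ 'n) \<Rightarrow> ('p mod_ring ^ 'n)) set" where
  "diag_T = {g \<in> GL_V. \<forall>i. \<exists>c. g (axis i 1) = c *s axis i 1}"

definition lin_subspace :: "('p::prime_card mod_ring ^ 'n) set \<Rightarrow> bool" where
  "lin_subspace W \<longleftrightarrow> 0 \<in> W \<and> (\<forall>x\<in>W. \<forall>y\<in>W. x + y \<in> W) \<and> (\<forall>c. \<forall>x\<in>W. c *s x \<in> W)"

definition setstab_GL :: "('p::prime_card mod_ring ^ 'n) set \<Rightarrow> (('p mod_ring ^ 'n) \<Rightarrow> ('p mod_ring ^ 'n)) set" where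
  "setstab_GL W = {g \<in> GL_V. g ` W = W}"

end

theory Submission
  imports Defs
begin


fun P :: "nat \<Rightarrow> nat set list" where
  "P 0 = []"
| "P (Suc d) = P d @ map (\<lambda>k. {..d} - {k}) [0..<d]"

lemma P_len: "length (P d) = d * (d - 1) div 2"
proof (induction d)
  case (Suc d)
  then show ?case by (cases d) (auto simp: algebra_simps)
qed simp

lemma P_sub: "S \<in> set (P d) \<Longrightarrow> S \<subseteq> {..<d}"
  by (induction d arbitrary: S) (auto simp: subset_iff less_Suc_eq)

lemma P_strict: "r < length (P d) \<Longrightarrow> \<exists>j k. k < j \<and> j < d \<and> P d ! r = {..j} - {k} \<and>
   (\<forall>r'<r. j \<in> P d ! r' \<longrightarrow> k \<in> P d ! r')"
proof (induction d arbitrary: r)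
  case 0 then show ?case by simp
next
  case (Suc d)
  show ?case
  proof (cases "r < length (P d)")
    case True
    from Suc.IH[OF True] obtain j k where "k < j" "j < d" "P d ! r = {..j} - {k}"
       "\<forall>r'<r. j \<in> P d ! r' \<longrightarrow> k \<in> P d ! r'" by blast
    then show ?thesis using True
      by (intro exI[of _ j] exI[of _ k]) (auto simp: nth_append)
  next
    case False
    define k where "k = r - length (P d)"
    have k: "k < d" using Suc.prems False by (simp add: k_def)
    have r: "r = length (P d) + k" using False k_def by simp
    have "\<forall>r'<r. d \<in> P (Suc d) ! r' \<longrightarrow> k \<in> P (Suc d) ! r'"
    proof (intro allI impI)
      fix r' assume "r' < r" "d \<in> P (Suc d) ! r'"
      show "k \<in> P (Suc d) ! r'"
      proof (cases "r' < length (P d)")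
        case True
        then have "P (Suc d) ! r' \<in> set (P d)" by (simp add: nth_append)
        then show ?thesis using P_sub \<open>d \<in> P (Suc d) ! r'\<close> by fastforce
      next
        case False
        define k' where "k' = r' - length (P d)"
        have "k' < k" using False \<open>r' < r\<close> r by (simp add: k'_def)
        have "P (Suc d) ! r' = {..d} - {k'}" using False \<open>k' < k\<close> k
          by (simp add: nth_append k'_def)
        then show ?thesis using \<open>k' < k\<close> k by auto
      qed
    qed
    then show ?thesis using k r
      by (intro exI[of _ d] exI[of _ k]) (auto simp: nth_append)
  qed
qed

lemma P_sep: "k < j \<Longrightarrow> j < d \<Longrightarrow> \<exists>r<length (P d). j \<in> P d ! r \<and> k \<notin> P d ! r"
proof (induction d)
  case 0 then show ?case by simp
next
  case (Suc d)
  show ?case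
  proof (cases "j < d")
    case True
    then obtain r where "r<length (P d)" "j \<in> P d ! r" "k \<notin> P d ! r" using Suc by blast
    then show ?thesis by (intro exI[of _ r]) (auto simp: nth_append)
  next
    case False
    then have "j = d" using Suc by simp
    then show ?thesis using Suc.prems
      by (intro exI[of _ "length (P d) + k"]) (auto simp: nth_append)
  qed
qed

definition L :: "nat \<Rightarrow> nat set list" where
  "L d = map (\<lambda>m. {..m}) [0..<d-1] @ P d"

lemma L_len: "d \<ge> 1 \<Longrightarrow> length (L d) = d * (d + 1) div 2 - 1"
proof -
  assume "d \<ge> 1"
  have "length (L d) = (d - 1) + d * (d - 1) div 2" by (simp add: L_def P_len)
  also have "\<dots> = (2 * (d - 1) + d * (d - 1)) div 2" by simp
  also have "2 * (d - 1) + d * (d - 1) = d * (d + 1) - 2" using \<open>d \<ge> 1\<close>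
    by (cases d) (auto simp: algebra_simps)
  also have "(d * (d + 1) - 2) div 2 = d * (d + 1) div 2 - 1" by simp
  finally show ?thesis .
qed

lemma L_strict: "0 < i \<Longrightarrow> i < length (L d) \<Longrightarrow> \<exists>a b. a < d \<and> b < d \<and> a \<in> L d ! i \<and> b \<notin> L d ! i
   \<and> (\<forall>i'<i. a \<in> L d ! i' \<longrightarrow> b \<in> L d ! i')"
proof -
  assume i: "0 < i" "i < length (L d)"
  show ?thesis
  proof (cases "i < d - 1")
    case True
    then show ?thesis
      by (intro exI[of _ i] exI[of _ "Suc i"]) (auto simp: L_def nth_append)
  next
    case False
    define r where "r = i - (d - 1)"
    have r: "r < length (P d)" "i = (d - 1) + r" using i False by (auto simp: r_def L_def)
    from P_strict[OF r(1)] obtain j k where jk: "k < j" "j < d" "P d ! r = {..j} - {k}"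
      "\<forall>r'<r. j \<in> P d ! r' \<longrightarrow> k \<in> P d ! r'" by blast
    have "\<forall>i'<i. j \<in> L d ! i' \<longrightarrow> k \<in> L d ! i'"
    proof (intro allI impI)
      fix i' assume i': "i' < i" "j \<in> L d ! i'"
      show "k \<in> L d ! i'"
      proof (cases "i' < d - 1")
        case True
        then show ?thesis using i' jk by (auto simp: L_def nth_append)
      next
        case False
        then show ?thesis using i' jk r by (auto simp: L_def nth_append)
      qed
    qed
    then show ?thesis using jk r
      by (intro exI[of _ j] exI[of _ k]) (auto simp: L_def nth_append)
  qed
qed

lemma L_sep: "a < d \<Longrightarrow> b < d \<Longrightarrow> a \<noteq> b \<Longrightarrow> \<exists>i<length (L d). a \<in> L d ! i \<and> b \<notin> L d ! i"
proof -
  assume ab: "a < d" "b < d" "a \<noteq> b"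
  show ?thesis
  proof (cases "a < b")
    case True
    then show ?thesis using ab
      by (intro exI[of _ a]) (auto simp: L_def nth_append)
  next
    case False
    then have "b < a" using ab by simp
    from P_sep[OF this ab(1)] obtain r where "r<length (P d)" "a \<in> P d ! r" "b \<notin> P d ! r" by blast
    then show ?thesis
      by (intro exI[of _ "d - 1 + r"]) (auto simp: L_def nth_append)
  qed
qed



definition Wc :: "'n set \<Rightarrow> ('p::prime_card mod_ring ^ 'n::finite) set" where
  "Wc A = {x. \<forall>i. i \<notin> A \<longrightarrow> x $ i = 0}"

lemma axis_comp: "axis j (1::'a::zero_neq_one) $ k = (if k = j then 1 else 0)"
  by (simp add: axis_def)

lemma Wc_sub: "lin_subspace (Wc A)"
  by (auto simp: lin_subspace_def Wc_def)

lemma lin_zero: "lin_map g \<Longrightarrow> g 0 = 0"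
  unfolding lin_map_def by (metis add_cancel_right_right add_0)

lemma lin_sum: assumes "lin_map g" "finite S" shows "g (sum f S) = (\<Sum>x\<in>S. g (f x))"
  using assms(2) by (induction S rule: finite_induct) (use assms(1) in \<open>auto simp: lin_zero lin_map_def\<close>)

lemma vec_expand: "x = (\<Sum>j\<in>UNIV. (x $ j) *s axis j (1::'a::comm_ring_1)) "
  by (simp add: vec_eq_iff axis_comp if_distrib cong: if_cong)

lemma lin_expand: "lin_map g \<Longrightarrow> g x = (\<Sum>j\<in>UNIV. (x $ j) *s g (axis j 1))"
proof -
  assume g: "lin_map g"
  have "g x = g (\<Sum>j\<in>UNIV. (x $ j) *s axis j 1)" by (subst vec_expand) simp
  also have "\<dots> = (\<Sum>j\<in>UNIV. g ((x $ j) *s axis j 1))" by (rule lin_sum[OF g]) simp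
  also have "\<dots> = (\<Sum>j\<in>UNIV. (x $ j) *s g (axis j 1))" using g by (simp add: lin_map_def)
  finally show ?thesis .
qed

lemma bij_sub_eq: "bij g \<Longrightarrow> g ` (W :: ('a::finite) set) \<subseteq> W \<Longrightarrow> g ` W = W"
  by (meson bij_betw_imp_inj_on card_image card_subset_eq finite inj_on_subset subset_UNIV)

lemma stab_iff:
  assumes g: "g \<in> GL_V"
  shows "g \<in> setstab_GL (Wc A) \<longleftrightarrow> (\<forall>j\<in>A. \<forall>k. k \<notin> A \<longrightarrow> g (axis j 1) $ k = 0)"
proof
  assume "g \<in> setstab_GL (Wc A)"
  then have "g ` Wc A = Wc A" by (simp add: setstab_GL_def)
  moreover have "axis j 1 \<in> Wc A" if "j \<in> A" for j
    using that by (auto simp: Wc_def axis_comp)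
  ultimately show "\<forall>j\<in>A. \<forall>k. k \<notin> A \<longrightarrow> g (axis j 1) $ k = 0"
    by (auto simp: Wc_def)
next
  assume h: "\<forall>j\<in>A. \<forall>k. k \<notin> A \<longrightarrow> g (axis j 1) $ k = 0"
  have lin: "lin_map g" and b: "bij g" using g by (auto simp: GL_V_def)
  have "g ` Wc A \<subseteq> Wc A"
  proof
    fix y assume "y \<in> g ` Wc A"
    then obtain x where x: "x \<in> Wc A" "y = g x" by blast
    show "y \<in> Wc A" unfolding Wc_def
    proof (intro CollectI allI impI)
      fix k assume k: "k \<notin> A"
      have "y $ k = (\<Sum>j\<in>UNIV. x $ j * g (axis j 1) $ k)"
        using x lin_expand[OF lin, of x] by simp
      also have "\<dots> = 0"
        by (rule sum.neutral) (use x h k in \<open>auto simp: Wc_def\<close>)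
      finally show "y $ k = 0" .
    qed
  qed
  then show "g \<in> setstab_GL (Wc A)" using bij_sub_eq[OF b] g by (simp add: setstab_GL_def)
qed



lemma two_ne0: assumes "odd (CARD('p::prime_card))" shows "(1::'p mod_ring) + 1 \<noteq> 0"
proof
  assume "(1::'p mod_ring) + 1 = 0"
  then have "of_nat 2 = (0::'p mod_ring)" by simp
  then have "CARD('p) dvd 2" by (rule of_nat_0_mod_ring_dvd)
  moreover have "prime (CARD('p))" by (rule prime_card)
  ultimately have "CARD('p) = 2" 
  proof -
    have "prime (2::nat)" by simp
    then have "CARD('p) = 1 \<or> CARD('p) = 2" using \<open>CARD('p) dvd 2\<close> prime_nat_iff by blast
    then show ?thesis using prime_gt_1_nat[OF \<open>prime (CARD('p))\<close>] by auto
  qed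
  then show False using assms by simp
qed

lemma id_GL: "id \<in> GL_V" by (simp add: GL_V_def lin_map_def)

lemma GL_AGL: "GL_V \<subseteq> AGL_V"
proof
  fix g assume "g \<in> GL_V"
  have "g = (\<lambda>v. g v + 0)" by simp
  then show "g \<in> AGL_V" unfolding AGL_V_def using \<open>g \<in> GL_V\<close> by blast
qed

lemma AGL_Sym: "AGL_V \<subseteq> Sym_V"
proof
  fix f assume "f \<in> AGL_V"
  then obtain g u where f: "f = (\<lambda>v. g v + u)" and g: "g \<in> GL_V" by (auto simp: AGL_V_def)
  have b: "bij g" using g by (simp add: GL_V_def)
  have "inj f" unfolding f by (rule injI) (use b in \<open>auto simp: bij_def inj_eq\<close>)
  moreover have "surj f"
  proof (rule surjI)
    fix y show "f (inv_into UNIV g (y - u)) = y" unfolding f using b by (simp add: bij_is_surj surj_f_inv_f)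
  qed
  ultimately show "f \<in> Sym_V" by (simp add: Sym_V_def bij_def)
qed

lemma E_GL:
  fixes i0 i1 :: "'n::finite"
  assumes "i0 \<noteq> i1"
  shows "(\<lambda>x::'p::prime_card mod_ring ^ 'n. x + (x $ i0) *s axis i1 1) \<in> GL_V"
proof -
  let ?E = "(\<lambda>x::'p::prime_card mod_ring ^ 'n. x + (x $ i0) *s axis i1 1)"
  let ?F = "(\<lambda>x::'p::prime_card mod_ring ^ 'n. x - (x $ i0) *s axis i1 1)"
  have 1: "?F (?E x) = x" for x using assms by (simp add: vec_eq_iff axis_comp)
  have 2: "?E (?F x) = x" for x using assms by (simp add: vec_eq_iff axis_comp)
  have "inj ?E" by (rule injI) (metis 1)
  moreover have "surj ?E" by (rule surjI[of _ ?F]) (rule 2)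
  ultimately have "bij ?E" by (simp add: bij_def)
  moreover have "lin_map ?E" unfolding lin_map_def
  proof (intro conjI allI)
    fix x y :: "'p mod_ring ^ 'n"
    show "?E (x + y) = ?E x + ?E y" by (simp add: vec_eq_iff distrib_right)
  next
    fix c :: "'p mod_ring" and x :: "'p mod_ring ^ 'n"
    show "?E (c *s x) = c *s ?E x" by (simp add: vec_eq_iff distrib_left mult.assoc)
  qed
  ultimately show ?thesis by (simp add: GL_V_def)
qed



lemma E_comp: "(axis j 1 + (axis j 1 $ i0) *s axis i1 (1::'a::comm_ring_1)) $ k =
   (if k = j then 1 else 0) + (if j = i0 \<and> k = i1 then 1 else 0)"
  by (simp add: axis_comp)

theorem lemma3p4:
  assumes "odd (CARD('p::prime_card))"
    and "CARD('n::finite) \<ge> 2"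
  defines "l1 \<equiv> CARD('n) * (CARD('n) + 1) div 2 - 1"
  shows "\<exists>K :: nat \<Rightarrow> (('p mod_ring ^ 'n) \<Rightarrow> ('p mod_ring ^ 'n)) set.
     (\<forall>i\<in>{1..l1}. \<exists>W. lin_subspace W \<and> K i = setstab_GL W) \<and>
     (AGL_V :: (('p mod_ring ^ 'n) \<Rightarrow> ('p mod_ring ^ 'n)) set) \<subset> Sym_V \<and>
     K 1 \<subset> AGL_V \<and>
     (\<forall>j\<in>{1..<l1}. (\<Inter>i\<in>{1..Suc j}. K i) \<subset> (\<Inter>i\<in>{1..j}. K i)) \<and>
     (\<Inter>i\<in>{1..l1}. K i) = diag_T"
proof -
  define d where "d = CARD('n)"
  have d2: "d \<ge> 2" using assms(2) by (simp add: d_def)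
  obtain e :: "nat \<Rightarrow> 'n" where e: "bij_betw e {0..<d} UNIV"
    using ex_bij_betw_nat_finite[of "UNIV :: 'n set"] by (auto simp: d_def)
  have einj: "e a = e b \<longleftrightarrow> a = b" if "a < d" "b < d" for a b
    using e that by (auto simp: bij_betw_def inj_on_def)
  have esurj: "\<exists>a<d. i = e a" for i
    using e by (metis atLeastLessThan_iff bij_betw_iff_bijections iso_tuple_UNIV_I)
  define LL where "LL = L d"
  have l1: "l1 = length LL" using d2 by (simp add: LL_def L_len l1_def d_def)
  have l1pos: "l1 \<ge> 1" using d2 by (simp add: l1 LL_def L_def)
  define A where "A r = e ` (LL ! r \<inter> {..<d})" for r
  have eA: "e a \<in> A r \<longleftrightarrow> a \<in> LL ! r" if "a < d" for a r
    using that einj by (auto simp: A_def)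
  define K :: "nat \<Rightarrow> (('p mod_ring ^ 'n) \<Rightarrow> ('p mod_ring ^ 'n)) set"
    where "K i = setstab_GL (Wc (A (i - 1)))" for i
  have Kchar: "g \<in> (\<Inter>i\<in>{1..n}. K i) \<longleftrightarrow> g \<in> GL_V \<and>
     (\<forall>r<n. \<forall>a<d. \<forall>b<d. a \<in> LL ! r \<longrightarrow> b \<notin> LL ! r \<longrightarrow> g (axis (e a) 1) $ e b = 0)"
    if "n \<ge> 1" for n g
  proof
    assume g: "g \<in> (\<Inter>i\<in>{1..n}. K i)"
    have gGL: "g \<in> GL_V" using g that by (auto simp: K_def setstab_GL_def)
    show "g \<in> GL_V \<and> (\<forall>r<n. \<forall>a<d. \<forall>b<d. a \<in> LL ! r \<longrightarrow> b \<notin> LL ! r \<longrightarrow> g (axis (e a) 1) $ e b = 0)"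
    proof (intro conjI allI impI gGL)
      fix r a b assume r: "r < n" "a < d" "b < d" "a \<in> LL ! r" "b \<notin> LL ! r"
      have "g \<in> K (Suc r)" using g r by auto
      then have "\<forall>j\<in>A r. \<forall>k. k \<notin> A r \<longrightarrow> g (axis j 1) $ k = 0"
        using stab_iff[OF gGL] by (simp add: K_def)
      then show "g (axis (e a) 1) $ e b = 0" using r eA by blast
    qed
  next
    assume g: "g \<in> GL_V \<and> (\<forall>r<n. \<forall>a<d. \<forall>b<d. a \<in> LL ! r \<longrightarrow> b \<notin> LL ! r \<longrightarrow> g (axis (e a) 1) $ e b = 0)"
    show "g \<in> (\<Inter>i\<in>{1..n}. K i)"
    proof
      fix i assume i: "i \<in> {1..n}"
      have "\<forall>j\<in>A (i - 1). \<forall>k. k \<notin> A (i - 1) \<longrightarrow> g (axis j 1) $ k = 0"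
      proof (intro ballI allI impI)
        fix j k assume jk: "j \<in> A (i - 1)" "k \<notin> A (i - 1)"
        obtain a where a: "a < d" "j = e a" using esurj by blast
        obtain b where b: "b < d" "k = e b" using esurj by blast
        have "i - 1 < n" using i by auto
        moreover have "a \<in> LL ! (i - 1)" "b \<notin> LL ! (i - 1)" using a b jk eA by auto
        ultimately show "g (axis j 1) $ k = 0" using g a b by blast
      qed
      then show "g \<in> K i" using stab_iff[of g "A (i - 1)"] g unfolding K_def by blast
    qed
  qed
  define i0 where "i0 = e 0"
  define i1 where "i1 = e 1"
  have i01: "i0 \<noteq> i1" using einj[of 0 1] d2 by (simp add: i0_def i1_def)
  define u :: "'p mod_ring ^ 'n" where "u = axis i0 1"
  define v :: "'p mod_ring ^ 'n" where "v = axis i1 1"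
  have two: "(1::'p mod_ring) + 1 \<noteq> 0" by (rule two_ne0[OF assms(1)])
  have part1: "\<forall>i\<in>{1..l1}. \<exists>W. lin_subspace W \<and> K i = setstab_GL W"
    using Wc_sub K_def by blast
  have part2: "(AGL_V :: (('p mod_ring ^ 'n) \<Rightarrow> ('p mod_ring ^ 'n)) set) \<subset> Sym_V"
  proof -
    define \<sigma> where "\<sigma> x = (if x = u then v else if x = v then u else x)" for x
    have "\<sigma> \<circ> \<sigma> = id" by (auto simp: \<sigma>_def fun_eq_iff)
    then have "bij \<sigma>" using o_bij by blast
    then have "\<sigma> \<in> Sym_V" by (simp add: Sym_V_def)
    moreover have "\<sigma> \<notin> AGL_V"
    proof
      assume "\<sigma> \<in> AGL_V"
      then obtain g w where gw: "\<sigma> = (\<lambda>x. g x + w)" and g: "g \<in> GL_V" by (auto simp: AGL_V_def)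
      have lin: "lin_map g" using g by (simp add: GL_V_def)
      have u0: "u \<noteq> 0" "v \<noteq> 0" by (auto simp: u_def v_def)
      have "\<sigma> 0 = 0" using u0 by (simp add: \<sigma>_def)
      then have "w = 0" using gw lin_zero[OF lin] by (metis add_0)
      then have sg: "\<sigma> x = g x" for x using gw by simp
      have c1: "(u + u) $ i0 = 1 + 1" by (simp add: u_def)
      have c2: "v $ i0 = 0" "(v + v) $ i0 = 0" using i01 by (auto simp: v_def axis_comp)
      have uu: "u + u \<noteq> u" "u + u \<noteq> v" "u + u \<noteq> v + v"
        using u0 two c1 c2 by (metis add_cancel_right_right)+
      have "\<sigma> (u + u) = u + u" using uu by (simp add: \<sigma>_def)
      moreover have "\<sigma> (u + u) = v + v"
      proof -
        have e1: "\<sigma> (u + u) = g (u + u)" by (rule sg)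
        have e2: "g (u + u) = g u + g u" using lin unfolding lin_map_def by blast
        have e3: "g u = v" using sg[of u] by (simp add: \<sigma>_def)
        show ?thesis using e1 e2 e3 by simp
      qed
      ultimately show False using uu by simp
    qed
    ultimately show ?thesis using AGL_Sym by blast
  qed
  have part3: "K 1 \<subset> AGL_V"
  proof -
    have "K 1 \<subseteq> GL_V" by (simp add: K_def setstab_GL_def)
    then have "K 1 \<subseteq> AGL_V" using GL_AGL by blast
    moreover have "(\<lambda>x. id x + u) \<in> AGL_V" using id_GL unfolding AGL_V_def by blast
    moreover have "(\<lambda>x. id x + u) \<notin> K 1"
    proof
      assume "(\<lambda>x. id x + u) \<in> K 1"
      then have "lin_map (\<lambda>x. id x + u)" by (simp add: K_def setstab_GL_def GL_V_def)
      from lin_zero[OF this] show False by (simp add: u_def)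
    qed
    ultimately show ?thesis by blast
  qed
  have part4: "\<forall>j\<in>{1..<l1}. (\<Inter>i\<in>{1..Suc j}. K i) \<subset> (\<Inter>i\<in>{1..j}. K i)"
  proof
    fix j assume j: "j \<in> {1..<l1}"
    have sub: "(\<Inter>i\<in>{1..Suc j}. K i) \<subseteq> (\<Inter>i\<in>{1..j}. K i)" by auto
    obtain a b where ab: "a < d" "b < d" "a \<in> LL ! j" "b \<notin> LL ! j"
      "\<forall>i'<j. a \<in> LL ! i' \<longrightarrow> b \<in> LL ! i'"
      using L_strict[of j d] j l1 by (auto simp: LL_def)
    have abne: "a \<noteq> b" using ab by auto
    define E where "E = (\<lambda>x::'p mod_ring ^ 'n. x + (x $ e a) *s axis (e b) 1)"
    have EGL: "E \<in> GL_V" unfolding E_def by (rule E_GL) (use einj ab abne in auto)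
    have Eax: "E (axis (e a') 1) $ e b' = (if a' = a \<and> b' = b then 1 else 0)"
      if "a' < d" "b' < d" "a' \<noteq> b'" for a' b'
      using that ab by (auto simp: E_def axis_comp einj)
    have "E \<in> (\<Inter>i\<in>{1..j}. K i)"
      unfolding Kchar[OF _] using j
    proof -
      have "\<forall>r<j. \<forall>a'<d. \<forall>b'<d. a' \<in> LL ! r \<longrightarrow> b' \<notin> LL ! r \<longrightarrow> E (axis (e a') 1) $ e b' = 0"
      proof (intro allI impI)
        fix r a' b' assume h: "r < j" "a' < d" "b' < d" "a' \<in> LL ! r" "b' \<notin> LL ! r"
        then have "a' \<noteq> b'" by auto
        then show "E (axis (e a') 1) $ e b' = 0" using Eax h ab by auto
      qed
      then show ?thesis using Kchar[of j E] j EGL by auto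
    qed
    moreover have "E \<notin> (\<Inter>i\<in>{1..Suc j}. K i)"
    proof
      assume "E \<in> (\<Inter>i\<in>{1..Suc j}. K i)"
      then have "E (axis (e a) 1) $ e b = 0" using Kchar[of "Suc j" E] ab by auto
      then show False using Eax[of a b] ab abne by simp
    qed
    ultimately show "(\<Inter>i\<in>{1..Suc j}. K i) \<subset> (\<Inter>i\<in>{1..j}. K i)" using sub by blast
  qed
  have part5: "(\<Inter>i\<in>{1..l1}. K i) = diag_T"
  proof
    show "(\<Inter>i\<in>{1..l1}. K i) \<subseteq> diag_T"
    proof
      fix g assume "g \<in> (\<Inter>i\<in>{1..l1}. K i)"
      then have g: "g \<in> GL_V" and gz: "\<forall>r<l1. \<forall>a<d. \<forall>b<d. a \<in> LL ! r \<longrightarrow> b \<notin> LL ! r \<longrightarrow> g (axis (e a) 1) $ e b = 0"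
        using Kchar[OF l1pos] by auto
      have off: "g (axis i 1) $ k = 0" if "i \<noteq> k" for i k
      proof -
        obtain a where a: "a < d" "i = e a" using esurj by blast
        obtain b where b: "b < d" "k = e b" using esurj by blast
        have "a \<noteq> b" using a b that by auto
        then obtain r where "r < l1" "a \<in> LL ! r" "b \<notin> LL ! r"
          using L_sep[of a d b] a b l1 by (auto simp: LL_def)
        then show ?thesis using gz a b by auto
      qed
      have "g (axis i 1) = (g (axis i 1) $ i) *s axis i 1" for i
        using off by (auto simp: vec_eq_iff axis_comp)
      then show "g \<in> diag_T" using g by (auto simp: diag_T_def)
    qed
  next
    show "diag_T \<subseteq> (\<Inter>i\<in>{1..l1}. K i)"
    proof
      fix g :: "'p mod_ring ^ 'n \<Rightarrow> 'p mod_ring ^ 'n" assume g: "g \<in> diag_T"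
      have "g (axis (e a) 1) $ e b = 0" if "a < d" "b < d" "a \<noteq> b" for a b
      proof -
        obtain c where "g (axis (e a) 1) = c *s axis (e a) 1" using g by (auto simp: diag_T_def)
        then show ?thesis using that einj by (simp add: axis_comp)
      qed
      moreover have "g \<in> GL_V" using g by (simp add: diag_T_def)
      ultimately show "g \<in> (\<Inter>i\<in>{1..l1}. K i)" using Kchar[OF l1pos, of g] by blast
    qed
  qed
  show ?thesis using part1 part2 part3 part4 part5 by blast
qed

end
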